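(* Let $g$ be an $n$-person WTT game form satisfying the standing assumptions below, let $i\in[n]$ and $j\in X_i$. Then either the hyperplane $H_j$ has a proper outcome, or $H_j$ is a sink hyperplane.
   Context: Let $X_1,\dots,X_n$ and $A$ be finite nonempty sets. An $n$-person game form is a map $g: X_1\times\cdots\times X_n\to A$; elements of $X=X_1\times\cdots\times X_n$ are strategy profiles. For a direction $i\in[n]$ write $X_{-i}=\prod_{t\neq i}X_t$, and for $s\in X_i$, $y\in X_{-i}$ write $(s,y)$ for the profile with $i$-th coordinate $s$ and other coordinates $y$. The hyperplane perpendicular to direction $i$ at $s\in X_i$ is $H_s=\{x\in X: x_i=s\}$. $g$ is weakly totally tight (WTT) if for every $i\in[n]$, all $s\neq s'$ in $X_i$ and all $y\neq y'$ in $X_{-i}$, at least one of $g(s,y)=g(s,y')$, $g(s,y)=g(s',y)$, $g(s',y')=g(s',y)$, $g(s',y')=g(s,y')$ holds. A set $S\subseteq X$ is a constant region if there is $c\in A$ with $g(x)=c$ for all $x\in S$. For distinct $j,k\in X_i$, $H_j^{\neq}(k)=\{(j,y): y\in X_{-i},\ g(j,y)\neq g(k,y)\}$. We write $H_j\stackrel{c}{\longrightarrow}H_k$ if $g(x)=c$ for all $x\in H_j^{\neq}(k)$, and $H_j\stackrel{c}{\Longrightarrow}H_k$ if $H_j\stackrel{c}{\longrightarrow}H_k$ and there is no outcome $d$ with $H_k\stackrel{d}{\longrightarrow}H_j$. If there exist $k\in X_i\setminus\{j\}$ and $c\in A$ with $H_j\stackrel{c}{\Longrightarrow}H_k$, then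 $c$ is called the proper outcome of $H_j$ (for WTT $g$ it does not depend on the choice of $k$). $H_j$ is a sink hyperplane if for every $k\in X_i\setminus\{j\}$ there exists an outcome $c_k$ with $H_k\stackrel{c_k}{\longrightarrow}H_j$. Standing assumptions: no hyperplane of $g$ is a constant region, and for every $i$ and distinct $j,k\in X_i$ there is $y\in X_{-i}$ with $g(j,y)\neq g(k,y)$. *)

theory Defs
  imports "HOL-Library.FuncSet"
begin

text \<open>Players are indexed by 0..<n. A strategy profile is an extensional
function on {..<n} with x t in X t. For a direction i, a profile of the other
players is an extensional function on {..<n} - {i}.\<close>

definition profiles :: "nat \<Rightarrow> (nat \<Rightarrow> 's set) \<Rightarrow> (nat \<Rightarrow> 's) set" where
  "profiles n X = PiE {..<n} X"

definition others :: "nat \<Rightarrow> (nat \<Rightarrow> 's set) \<Rightarrow> nat \<Rightarrow> (nat \<Rightarrow> 's) set" where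
  "others n X i = PiE ({..<n} - {i}) X"

text \<open>The profile (s,y) with i-th coordinate s and other coordinates y.\<close>
definition join :: "nat \<Rightarrow> 's \<Rightarrow> (nat \<Rightarrow> 's) \<Rightarrow> (nat \<Rightarrow> 's)" where
  "join i s y = y(i := s)"

definition game_form :: "nat \<Rightarrow> (nat \<Rightarrow> 's set) \<Rightarrow> 'a set \<Rightarrow> ((nat \<Rightarrow> 's) \<Rightarrow> 'a) \<Rightarrow> bool" where
  "game_form n X A g \<longleftrightarrow> (\<forall>t<n. finite (X t) \<and> X t \<noteq> {}) \<and> finite A \<and> A \<noteq> {}
     \<and> (\<forall>x\<in>profiles n X. g x \<in> A)"

definition WTT :: "nat \<Rightarrow> (nat \<Rightarrow> 's set) \<Rightarrow> ((nat \<Rightarrow> 's) \<Rightarrow> 'a) \<Rightarrow> bool" where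
  "WTT n X g \<longleftrightarrow> (\<forall>i<n. \<forall>s\<in>X i. \<forall>s'\<in>X i. s \<noteq> s' \<longrightarrow>
     (\<forall>y\<in>others n X i. \<forall>y'\<in>others n X i. y \<noteq> y' \<longrightarrow>
        g (join i s y) = g (join i s y') \<or> g (join i s y) = g (join i s' y) \<or>
        g (join i s' y') = g (join i s' y) \<or> g (join i s' y') = g (join i s y')))"

definition hyperplane :: "nat \<Rightarrow> (nat \<Rightarrow> 's set) \<Rightarrow> nat \<Rightarrow> 's \<Rightarrow> (nat \<Rightarrow> 's) set" where
  "hyperplane n X i s = {x \<in> profiles n X. x i = s}"

definition constant_region :: "'a set \<Rightarrow> ((nat \<Rightarrow> 's) \<Rightarrow> 'a) \<Rightarrow> (nat \<Rightarrow> 's) set \<Rightarrow> bool" where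
  "constant_region A g S \<longleftrightarrow> (\<exists>c\<in>A. \<forall>x\<in>S. g x = c)"

definition Hneq :: "nat \<Rightarrow> (nat \<Rightarrow> 's set) \<Rightarrow> ((nat \<Rightarrow> 's) \<Rightarrow> 'a) \<Rightarrow> nat \<Rightarrow> 's \<Rightarrow> 's \<Rightarrow> (nat \<Rightarrow> 's) set" where
  "Hneq n X g i j k = {join i j y | y. y \<in> others n X i \<and> g (join i j y) \<noteq> g (join i k y)}"

definition arrow :: "nat \<Rightarrow> (nat \<Rightarrow> 's set) \<Rightarrow> ((nat \<Rightarrow> 's) \<Rightarrow> 'a) \<Rightarrow> nat \<Rightarrow> 's \<Rightarrow> 's \<Rightarrow> 'a \<Rightarrow> bool" where
  "arrow n X g i j k c \<longleftrightarrow> (\<forall>x\<in>Hneq n X g i j k. g x = c)"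

definition strong_arrow :: "nat \<Rightarrow> (nat \<Rightarrow> 's set) \<Rightarrow> 'a set \<Rightarrow> ((nat \<Rightarrow> 's) \<Rightarrow> 'a) \<Rightarrow> nat \<Rightarrow> 's \<Rightarrow> 's \<Rightarrow> 'a \<Rightarrow> bool" where
  "strong_arrow n X A g i j k c \<longleftrightarrow> arrow n X g i j k c \<and> \<not> (\<exists>d\<in>A. arrow n X g i k j d)"

definition has_proper_outcome :: "nat \<Rightarrow> (nat \<Rightarrow> 's set) \<Rightarrow> 'a set \<Rightarrow> ((nat \<Rightarrow> 's) \<Rightarrow> 'a) \<Rightarrow> nat \<Rightarrow> 's \<Rightarrow> bool" where
  "has_proper_outcome n X A g i j \<longleftrightarrow> (\<exists>k\<in>X i - {j}. \<exists>c\<in>A. strong_arrow n X A g i j k c)"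

definition sink_hyperplane :: "nat \<Rightarrow> (nat \<Rightarrow> 's set) \<Rightarrow> 'a set \<Rightarrow> ((nat \<Rightarrow> 's) \<Rightarrow> 'a) \<Rightarrow> nat \<Rightarrow> 's \<Rightarrow> bool" where
  "sink_hyperplane n X A g i j \<longleftrightarrow> (\<forall>k\<in>X i - {j}. \<exists>c\<in>A. arrow n X g i k j c)"

definition standing_assumptions :: "nat \<Rightarrow> (nat \<Rightarrow> 's set) \<Rightarrow> 'a set \<Rightarrow> ((nat \<Rightarrow> 's) \<Rightarrow> 'a) \<Rightarrow> bool" where
  "standing_assumptions n X A g \<longleftrightarrow>
     (\<forall>i<n. \<forall>s\<in>X i. \<not> constant_region A g (hyperplane n X i s)) \<and>
     (\<forall>i<n. \<forall>j\<in>X i. \<forall>k\<in>X i. j \<noteq> k \<longrightarrow>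
        (\<exists>y\<in>others n X i. g (join i j y) \<noteq> g (join i k y)))"

end

theory Submission
  imports Defs
begin

lemma two_col:
  assumes "\<And>y y'. y \<in> D \<Longrightarrow> y' \<in> D \<Longrightarrow> y \<noteq> y' \<Longrightarrow> a y = a y' \<or> b y = b y'"
  shows "(\<forall>y\<in>D. \<forall>y'\<in>D. a y = a y') \<or> (\<forall>y\<in>D. \<forall>y'\<in>D. b y = b y')"
proof (rule ccontr)
  assume "\<not> ?thesis"
  then obtain y1 y2 z1 z2 where h: "y1 \<in> D" "y2 \<in> D" "z1 \<in> D" "z2 \<in> D"
    "a y1 \<noteq> a y2" "b z1 \<noteq> b z2" by blast
  have P: "\<And>y y'. y \<in> D \<Longrightarrow> y' \<in> D \<Longrightarrow> a y = a y' \<or> b y = b y'"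
    using assms by blast
  have az: "a z1 = a z2" using P h by blast
  have "a y1 \<noteq> a z1 \<or> a y2 \<noteq> a z1" using h by metis
  then show False
  proof
    assume "a y1 \<noteq> a z1"
    then have "b y1 = b z1" "b y1 = b z2" using P h az by metis+
    then show False using h by simp
  next
    assume "a y2 \<noteq> a z1"
    then have "b y2 = b z1" "b y2 = b z2" using P h az by metis+
    then show False using h by simp
  qed
qed

lemma join_prof:
  assumes "i < n" "j \<in> X i" "y \<in> others n X i"
  shows "join i j y \<in> profiles n X"
  using assms unfolding profiles_def others_def join_def PiE_def Pi_def extensional_def
  by auto

theorem mainTheorem5:
  fixes n :: nat and X :: "nat \<Rightarrow> 's set" and A :: "'a set" and g :: "(nat \<Rightarrow> 's) \<Rightarrow> 'a"
  assumes "game_form n X A g"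
    and "WTT n X g"
    and "standing_assumptions n X A g"
    and "i < n" and "j \<in> X i"
  shows "has_proper_outcome n X A g i j \<or> sink_hyperplane n X A g i j"
proof (cases "sink_hyperplane n X A g i j")
  case True then show ?thesis by simp
next
  case False
  then obtain k where k: "k \<in> X i" "k \<noteq> j" and nk: "\<forall>d\<in>A. \<not> arrow n X g i k j d"
    unfolding sink_hyperplane_def by blast
  define D where "D = {y \<in> others n X i. g (join i j y) \<noteq> g (join i k y)}"
  have GA: "\<forall>x\<in>profiles n X. g x \<in> A" using assms(1) unfolding game_form_def by blast
  have HA: "\<And>y. y \<in> D \<Longrightarrow> g (join i j y) \<in> A" "\<And>y. y \<in> D \<Longrightarrow> g (join i k y) \<in> A"
  proof -
    fix y assume "y \<in> D" then have y: "y \<in> others n X i" unfolding D_def by simp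
    show "g (join i j y) \<in> A" using GA join_prof[OF assms(4) assms(5) y] by blast
    show "g (join i k y) \<in> A" using GA join_prof[OF assms(4) k(1) y] by blast
  qed
  have A0: "A \<noteq> {}" using assms(1) unfolding game_form_def by blast
  have W: "\<And>y y'. y \<in> D \<Longrightarrow> y' \<in> D \<Longrightarrow> y \<noteq> y' \<Longrightarrow>
      g (join i j y) = g (join i j y') \<or> g (join i k y) = g (join i k y')"
  proof -
    fix y y' assume "y \<in> D" "y' \<in> D" "y \<noteq> y'"
    then have "g (join i j y) = g (join i j y') \<or> g (join i j y) = g (join i k y) \<or>
        g (join i k y') = g (join i k y) \<or> g (join i k y') = g (join i j y')"
    proof -
      have y: "y \<in> others n X i" "y' \<in> others n X i" using \<open>y \<in> D\<close> \<open>y' \<in> D\<close> unfolding D_def by auto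
      have "\<forall>i<n. \<forall>s\<in>X i. \<forall>s'\<in>X i. s \<noteq> s' \<longrightarrow>
     (\<forall>y\<in>others n X i. \<forall>y'\<in>others n X i. y \<noteq> y' \<longrightarrow>
        g (join i s y) = g (join i s y') \<or> g (join i s y) = g (join i s' y) \<or>
        g (join i s' y') = g (join i s' y) \<or> g (join i s' y') = g (join i s y'))"
        using assms(2) unfolding WTT_def .
      then show ?thesis using assms(4,5) k y \<open>y \<noteq> y'\<close> by (metis (no_types, lifting))
    qed
    then show "g (join i j y) = g (join i j y') \<or> g (join i k y) = g (join i k y')"
      using \<open>y \<in> D\<close> \<open>y' \<in> D\<close> unfolding D_def by auto
  qed
  have Hj: "Hneq n X g i j k = (\<lambda>y. join i j y) ` D"
    unfolding Hneq_def D_def by auto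
  have Hk: "Hneq n X g i k j = (\<lambda>y. join i k y) ` D"
    unfolding Hneq_def D_def by auto
  have ex: "\<exists>c\<in>A. \<forall>y\<in>D. f y = c" if "\<forall>y\<in>D. \<forall>y'\<in>D. f y = f y'"
    and "\<And>y. y \<in> D \<Longrightarrow> f y \<in> A" for f :: "(nat \<Rightarrow> 's) \<Rightarrow> 'a"
  proof (cases "D = {}")
    case True then show ?thesis using A0 by auto
  next
    case False then obtain y0 where "y0 \<in> D" by blast
    then show ?thesis using that by metis
  qed
  from two_col[of D "\<lambda>y. g (join i j y)" "\<lambda>y. g (join i k y)", OF W]
  show ?thesis
  proof
    assume "\<forall>y\<in>D. \<forall>y'\<in>D. g (join i j y) = g (join i j y')"
    from ex[OF this HA(1)] obtain c where "c \<in> A" "\<forall>y\<in>D. g (join i j y) = c" by blast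
    then have "arrow n X g i j k c" unfolding arrow_def Hj by auto
    then have "strong_arrow n X A g i j k c" using nk unfolding strong_arrow_def by blast
    then show ?thesis using \<open>c \<in> A\<close> k unfolding has_proper_outcome_def by blast
  next
    assume "\<forall>y\<in>D. \<forall>y'\<in>D. g (join i k y) = g (join i k y')"
    from ex[OF this HA(2)] obtain c where "c \<in> A" "\<forall>y\<in>D. g (join i k y) = c" by blast
    then have "arrow n X g i k j c" unfolding arrow_def Hk by auto
    then show ?thesis using nk \<open>c \<in> A\<close> by blast
  qed
qed

end
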